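(* Let $\Phi_U$ be a pmf on a finite set $\mathcal U$ and $\Phi_{V|U}$ a channel to a finite set $\mathcal V$, with induced $\Phi_V$. Let $\mathcal B^{(n)}=\{u^n(j)\}_{j=1}^{2^{nR}}$ be a random codebook whose codewords are drawn mutually independently, each i.i.d. according to $\Phi_U$, and let $P_{V^n}(v^n)=2^{-nR}\sum_{j}\prod_{t=1}^n\Phi_{V|U}(v_t|u_t(j))$ be the induced output distribution, with desired distribution $Q_{V^n}=\prod_{t=1}^n\Phi_V(v_t)$. If $R>I_\Phi(U;V)$ then $\lim_{n\to\infty}\mathbf E\|P_{V^n}-Q_{V^n}\|_{TV}=0$, where the expectation is over the random codebook. Moreover, for every $n$, $$\mathbf E\|P_{V^n}-Q_{V^n}\|_{TV}\le \tfrac32\,2^{-\gamma n},$$ where $$\gamma=\max_{\beta\ge0,\beta'\ge0,(\beta,\beta')\neq(0,0)}\frac{1}{2\beta+\beta'}\Big(-\beta'\log\mathbf E_\Phi Z^{\beta}-2\beta\log \mathbf E_{\Phi_V}\sqrt{\mathbf E_{\Phi_{U|V}}Z^{1-\beta'}}\Big),\qquad Z=2^{-R}\frac{\Phi_{U,V}(U,V)}{\Phi_U(U)\Phi_V(V)}.$$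
   Context: Total variation $\|P-Q\|_{TV}=\frac12\sum|P-Q|$. All logarithms are base 2 and $R$ is in bits ($2^{nR}$ treated as an integer). $\mathbf E_\Phi$ is expectation under $\Phi_{U,V}=\Phi_U\Phi_{V|U}$; in $\mathbf E_{\Phi_V}\sqrt{\mathbf E_{\Phi_{U|V}}(\cdot)}$ the inner expectation is over $U$ given $V$ and the outer over $V$. *)

theory Defs
  imports "HOL-Probability.Probability"
begin

definition outdist :: "'u pmf \<Rightarrow> ('u \<Rightarrow> 'v pmf) \<Rightarrow> 'v pmf" where
  "outdist pu W = bind_pmf pu W"

definition joint :: "'u pmf \<Rightarrow> ('u \<Rightarrow> 'v pmf) \<Rightarrow> 'u \<Rightarrow> 'v \<Rightarrow> real" where
  "joint pu W u v = pmf pu u * pmf (W u) v"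

definition cond :: "'u pmf \<Rightarrow> ('u \<Rightarrow> 'v pmf) \<Rightarrow> 'u \<Rightarrow> 'v \<Rightarrow> real" where
  "cond pu W u v = joint pu W u v / pmf (outdist pu W) v"

definition mutual_info :: "'u::finite pmf \<Rightarrow> ('u \<Rightarrow> 'v::finite pmf) \<Rightarrow> real" where
  "mutual_info pu W = (\<Sum>u\<in>UNIV. \<Sum>v\<in>UNIV. joint pu W u v *
      log 2 (joint pu W u v / (pmf pu u * pmf (outdist pu W) v)))"

definition Zval :: "real \<Rightarrow> 'u pmf \<Rightarrow> ('u \<Rightarrow> 'v pmf) \<Rightarrow> 'u \<Rightarrow> 'v \<Rightarrow> real" where
  "Zval R pu W u v = 2 powr (-R) * joint pu W u v / (pmf pu u * pmf (outdist pu W) v)"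

definition gamma_obj :: "real \<Rightarrow> 'u::finite pmf \<Rightarrow> ('u \<Rightarrow> 'v::finite pmf) \<Rightarrow> real \<Rightarrow> real \<Rightarrow> real" where
  "gamma_obj R pu W b b' =
     (1 / (2 * b + b')) *
     ( - b' * log 2 (\<Sum>u\<in>UNIV. \<Sum>v\<in>UNIV. joint pu W u v * Zval R pu W u v powr b)
       - 2 * b * log 2 (\<Sum>v\<in>UNIV. pmf (outdist pu W) v *
             sqrt (\<Sum>u\<in>UNIV. cond pu W u v * Zval R pu W u v powr (1 - b'))))"

definition ncode :: "real \<Rightarrow> nat \<Rightarrow> nat" where
  "ncode R n = nat \<lceil>2 powr (real n * R)\<rceil>"

(* Random codebook: codeword j has letters c (j,t), t < n; all i.i.d. Phi_U *)
definition codebook_pmf :: "'u pmf \<Rightarrow> nat \<Rightarrow> nat \<Rightarrow> (nat \<times> nat \<Rightarrow> 'u) pmf" where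
  "codebook_pmf pu M n = Pi_pmf ({0..<M} \<times> {0..<n}) undefined (\<lambda>_. pu)"

definition Pout :: "('u \<Rightarrow> 'v pmf) \<Rightarrow> nat \<Rightarrow> nat \<Rightarrow> (nat \<times> nat \<Rightarrow> 'u) \<Rightarrow> (nat \<Rightarrow> 'v) \<Rightarrow> real" where
  "Pout W M n c vs = (1 / real M) * (\<Sum>j<M. \<Prod>t<n. pmf (W (c (j, t))) (vs t))"

definition Qout :: "'u pmf \<Rightarrow> ('u \<Rightarrow> 'v pmf) \<Rightarrow> nat \<Rightarrow> (nat \<Rightarrow> 'v) \<Rightarrow> real" where
  "Qout pu W n vs = (\<Prod>t<n. pmf (outdist pu W) (vs t))"

definition tv_seq :: "nat \<Rightarrow> ((nat \<Rightarrow> 'v::finite) \<Rightarrow> real) \<Rightarrow> ((nat \<Rightarrow> 'v) \<Rightarrow> real) \<Rightarrow> real" where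
  "tv_seq n P Q = (1/2) * (\<Sum>vs\<in>PiE {0..<n} (\<lambda>_. UNIV). \<bar>P vs - Q vs\<bar>)"

definition exp_tv :: "real \<Rightarrow> 'u::finite pmf \<Rightarrow> ('u \<Rightarrow> 'v::finite pmf) \<Rightarrow> nat \<Rightarrow> real" where
  "exp_tv R pu W n = measure_pmf.expectation (codebook_pmf pu (ncode R n) n)
       (\<lambda>c. tv_seq n (Pout W (ncode R n) n c) (Qout pu W n))"

end

theory Submission
  imports Defs
begin


lemma pmf_abs_le_sqrt:
  fixes Z :: "'a \<Rightarrow> real"
  assumes fin: "finite (set_pmf p)"
  shows "measure_pmf.expectation p (\<lambda>x. \<bar>Z x\<bar>) \<le> sqrt (measure_pmf.expectation p (\<lambda>x. (Z x)^2))"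
proof -
  have i1: "integrable (measure_pmf p) (\<lambda>x. \<bar>Z x\<bar>)" by (rule integrable_measure_pmf_finite[OF fin])
  have i2: "integrable (measure_pmf p) (\<lambda>x. (\<bar>Z x\<bar>)^2)" by (rule integrable_measure_pmf_finite[OF fin])
  have "measure_pmf.variance p (\<lambda>x. \<bar>Z x\<bar>) = measure_pmf.expectation p (\<lambda>x. (\<bar>Z x\<bar>)^2) - (measure_pmf.expectation p (\<lambda>x. \<bar>Z x\<bar>))^2"
    by (rule measure_pmf.variance_eq[OF i1 i2])
  moreover have "measure_pmf.variance p (\<lambda>x. \<bar>Z x\<bar>) \<ge> 0" by (intro integral_nonneg_AE) auto
  ultimately have "(measure_pmf.expectation p (\<lambda>x. \<bar>Z x\<bar>))^2 \<le> measure_pmf.expectation p (\<lambda>x. (Z x)^2)"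
    by simp
  thus ?thesis by (rule real_le_rsqrt)
qed

definition Xc :: "'u pmf \<Rightarrow> nat \<Rightarrow> (nat \<Rightarrow> 'u) pmf" where
  "Xc pu n = Pi_pmf {0..<n} undefined (\<lambda>_. pu)"

definition CB :: "'u pmf \<Rightarrow> nat \<Rightarrow> nat \<Rightarrow> (nat \<Rightarrow> nat \<Rightarrow> 'u) pmf" where
  "CB pu M n = Pi_pmf {0..<M} (\<lambda>_. undefined) (\<lambda>_. Xc pu n)"

lemma finite_Xc: "finite (set_pmf (Xc (pu :: 'u::finite pmf) n))"
  unfolding Xc_def by (subst set_Pi_pmf) auto

lemma finite_CB: "finite (set_pmf (CB (pu :: 'u::finite pmf) M n))"
  unfolding CB_def by (subst set_Pi_pmf) (auto intro!: finite_PiE_dflt simp: finite_Xc)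

lemma codebook_nested:
  "codebook_pmf pu M n = map_pmf (\<lambda>C p. C (fst p) (snd p)) (CB pu M n)"
proof (rule pmf_eqI)
  fix c :: "nat \<times> nat \<Rightarrow> 'a"
  define g :: "(nat \<Rightarrow> nat \<Rightarrow> 'a) \<Rightarrow> nat \<times> nat \<Rightarrow> 'a" where "g = (\<lambda>C p. C (fst p) (snd p))"
  have inj: "inj g" unfolding g_def inj_def by (auto simp: fun_eq_iff)
  have c: "c = g (\<lambda>j t. c (j, t))" by (simp add: g_def)
  have "pmf (map_pmf g (CB pu M n)) c = pmf (CB pu M n) (\<lambda>j t. c (j, t))"
    by (subst c, rule pmf_map_inj'[OF inj])
  also have "\<dots> = pmf (codebook_pmf pu M n) c"
  proof (cases "\<forall>p. p \<notin> {0..<M} \<times> {0..<n} \<longrightarrow> c p = undefined")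
    case True
    have "pmf (CB pu M n) (\<lambda>j t. c (j, t)) = (\<Prod>j\<in>{0..<M}. pmf (Xc pu n) (\<lambda>t. c (j, t)))"
      unfolding CB_def using True by (subst pmf_Pi) (auto simp: fun_eq_iff)
    also have "\<dots> = (\<Prod>j\<in>{0..<M}. \<Prod>t\<in>{0..<n}. pmf pu (c (j, t)))"
      unfolding Xc_def using True by (intro prod.cong refl, subst pmf_Pi) auto
    also have "\<dots> = (\<Prod>p\<in>{0..<M} \<times> {0..<n}. pmf pu (c p))"
      by (simp add: prod.cartesian_product)
    also have "\<dots> = pmf (codebook_pmf pu M n) c"
      unfolding codebook_pmf_def using True by (subst pmf_Pi) auto
    finally show ?thesis .
  next
    case False
    then obtain j t where jt: "(j, t) \<notin> {0..<M} \<times> {0..<n}" "c (j, t) \<noteq> undefined" by auto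
    have r: "pmf (codebook_pmf pu M n) c = 0"
      unfolding codebook_pmf_def using False by (subst pmf_Pi) auto
    show ?thesis
    proof (cases "j < M")
      case True
      then have tn: "\<not> t < n" using jt by auto
      have "pmf (Xc pu n) (\<lambda>t. c (j, t)) = 0"
        unfolding Xc_def using tn jt by (subst pmf_Pi) auto
      hence "pmf (CB pu M n) (\<lambda>j t. c (j, t)) = 0"
        unfolding CB_def using True by (subst pmf_Pi) auto
      thus ?thesis using r by simp
    next
      case False
      hence "pmf (CB pu M n) (\<lambda>j t. c (j, t)) = 0"
        unfolding CB_def using jt by (subst pmf_Pi) (auto simp: fun_eq_iff intro!: exI[of _ j])
      thus ?thesis using r by simp
    qed
  qed
  finally show "pmf (codebook_pmf pu M n) c = pmf (map_pmf (\<lambda>C p. C (fst p) (snd p)) (CB pu M n)) c"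
    by (simp add: g_def)
qed

lemma CB_single:
  fixes f :: "(nat \<Rightarrow> 'u) \<Rightarrow> real"
  assumes "j < M"
  shows "measure_pmf.expectation (CB pu M n) (\<lambda>C. f (C j)) = measure_pmf.expectation (Xc pu n) f"
proof -
  have "map_pmf (\<lambda>C. C j) (CB pu M n) = Xc pu n"
    unfolding CB_def using assms by (subst Pi_pmf_component) auto
  hence "measure_pmf.expectation (map_pmf (\<lambda>C. C j) (CB pu M n)) f = measure_pmf.expectation (Xc pu n) f"
    by simp
  thus ?thesis by (simp add: integral_map_pmf)
qed

lemma CB_pair:
  fixes h :: "(nat \<Rightarrow> 'u::finite) \<Rightarrow> real"
  assumes "j < M" "k < M" "j \<noteq> k" "\<And>x. h x \<ge> 0"
  shows "measure_pmf.expectation (CB pu M n) (\<lambda>C. h (C j) * h (C k)) = (measure_pmf.expectation (Xc pu n) h)^2"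
proof -
  define f where "f = (\<lambda>i x. (if i = j then h x else 1) * (if i = k then h x else (1::real)))"
  have "(\<lambda>C. h (C j) * h (C k)) = (\<lambda>C. \<Prod>i\<in>{0..<M}. f i (C i))"
    unfolding f_def using assms by (auto simp: prod.distrib fun_eq_iff)
  hence "measure_pmf.expectation (CB pu M n) (\<lambda>C. h (C j) * h (C k))
      = (\<Prod>i\<in>{0..<M}. measure_pmf.expectation (Xc pu n) (f i))"
    unfolding CB_def
    by (simp, intro expectation_prod_Pi_pmf)
       (auto simp: f_def assms integrable_measure_pmf_finite finite_Xc)
  also have "\<dots> = (\<Prod>i\<in>{0..<M}. (if i = j then measure_pmf.expectation (Xc pu n) h else 1) *
        (if i = k then measure_pmf.expectation (Xc pu n) h else 1))"
    using assms(3) by (intro prod.cong refl) (auto simp: f_def)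
  also have "\<dots> = (measure_pmf.expectation (Xc pu n) h)^2"
    using assms by (simp add: prod.distrib power2_eq_square)
  finally show ?thesis .
qed

lemma avg_dev:
  fixes h :: "(nat \<Rightarrow> 'u::finite) \<Rightarrow> real"
  assumes M: "M \<ge> 1" and h: "\<And>x. h x \<ge> 0"
  shows "measure_pmf.expectation (CB pu M n)
           (\<lambda>C. \<bar>(1 / real M) * (\<Sum>j<M. h (C j)) - measure_pmf.expectation (Xc pu n) h\<bar>)
         \<le> sqrt (measure_pmf.expectation (Xc pu n) (\<lambda>x. (h x)^2) / real M)"
proof -
  define \<mu> where "\<mu> = measure_pmf.expectation (Xc pu n) h"
  define e2 where "e2 = measure_pmf.expectation (Xc pu n) (\<lambda>x. (h x)^2)"
  let ?E = "measure_pmf.expectation (CB pu M n)"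
  have int: "integrable (measure_pmf (CB pu M n)) f" for f :: "_ \<Rightarrow> real"
    by (rule integrable_measure_pmf_finite[OF finite_CB])
  have pairs: "?E (\<lambda>C. h (C j) * h (C k)) = (if j = k then e2 else \<mu>^2)" if "j < M" "k < M" for j k
  proof (cases "j = k")
    case True
    then show ?thesis using CB_single[OF that(1), where f="\<lambda>x. h x * h x" and pu=pu and n=n]
      by (simp add: e2_def power2_eq_square)
  next
    case False
    then show ?thesis using CB_pair[OF that False h] by (simp add: \<mu>_def)
  qed
  have single: "?E (\<lambda>C. h (C j)) = \<mu>" if "j < M" for j
    using CB_single[OF that] by (simp add: \<mu>_def)
  have sq: "(\<lambda>C. ((1 / real M) * (\<Sum>j<M. h (C j)) - \<mu>)^2) =
     (\<lambda>C. (1 / real M)^2 * (\<Sum>j<M. \<Sum>k<M. h (C j) * h (C k)) - 2 * \<mu> * (1 / real M) * (\<Sum>j<M. h (C j)) + \<mu>^2)"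
    by (auto simp: fun_eq_iff power2_eq_square sum_product algebra_simps)
  have "?E (\<lambda>C. ((1 / real M) * (\<Sum>j<M. h (C j)) - \<mu>)^2) =
     (1 / real M)^2 * (\<Sum>j<M. \<Sum>k<M. ?E (\<lambda>C. h (C j) * h (C k))) - 2 * \<mu> * (1 / real M) * (\<Sum>j<M. ?E (\<lambda>C. h (C j))) + \<mu>^2"
    unfolding sq by (simp add: int Bochner_Integration.integral_sum)
  also have "(\<Sum>j<M. \<Sum>k<M. ?E (\<lambda>C. h (C j) * h (C k))) = (\<Sum>j<M. \<Sum>k<M. \<mu>^2 + (if j = k then e2 - \<mu>^2 else 0))"
    by (intro sum.cong refl) (simp add: pairs)
  also have "\<dots> = real M * real M * \<mu>^2 + real M * (e2 - \<mu>^2)"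
    by (simp add: sum.distrib algebra_simps)
  also have "(\<Sum>j<M. ?E (\<lambda>C. h (C j))) = real M * \<mu>"
    by (simp add: single)
  finally have "?E (\<lambda>C. ((1 / real M) * (\<Sum>j<M. h (C j)) - \<mu>)^2) = (e2 - \<mu>^2) / real M"
    using M by (simp add: field_simps power2_eq_square)
  also have "\<dots> \<le> e2 / real M" using M by (simp add: divide_right_mono)
  finally have v: "?E (\<lambda>C. ((1 / real M) * (\<Sum>j<M. h (C j)) - \<mu>)^2) \<le> e2 / real M" .
  have "?E (\<lambda>C. \<bar>(1 / real M) * (\<Sum>j<M. h (C j)) - \<mu>\<bar>) \<le> sqrt (?E (\<lambda>C. ((1 / real M) * (\<Sum>j<M. h (C j)) - \<mu>)^2))"
    by (rule pmf_abs_le_sqrt[OF finite_CB])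
  also have "\<dots> \<le> sqrt (e2 / real M)" using v by simp
  finally show ?thesis by (simp add: \<mu>_def e2_def)
qed

definition ell :: "'u pmf \<Rightarrow> ('u \<Rightarrow> 'v pmf) \<Rightarrow> 'u \<Rightarrow> 'v \<Rightarrow> real" where
  "ell pu W u v = joint pu W u v / (pmf pu u * pmf (outdist pu W) v)"

definition Wn :: "('u \<Rightarrow> 'v pmf) \<Rightarrow> nat \<Rightarrow> (nat \<Rightarrow> 'u) \<Rightarrow> (nat \<Rightarrow> 'v) \<Rightarrow> real" where
  "Wn W n x vs = (\<Prod>t<n. pmf (W (x t)) (vs t))"

definition Lnn :: "'u pmf \<Rightarrow> ('u \<Rightarrow> 'v pmf) \<Rightarrow> nat \<Rightarrow> (nat \<Rightarrow> 'u) \<Rightarrow> (nat \<Rightarrow> 'v) \<Rightarrow> real" where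
  "Lnn pu W n x vs = (\<Prod>t<n. ell pu W (x t) (vs t))"

lemma Wn_nonneg: "Wn W n x vs \<ge> 0" unfolding Wn_def by (intro prod_nonneg) auto

lemma ell_nonneg: "ell pu W u v \<ge> 0" unfolding ell_def joint_def by auto

lemma Lnn_nonneg: "Lnn pu W n x vs \<ge> 0" unfolding Lnn_def by (intro prod_nonneg) (auto simp: ell_nonneg)

lemma Xc_prod:
  fixes f :: "nat \<Rightarrow> 'u::finite \<Rightarrow> real"
  assumes "\<And>t u. f t u \<ge> 0"
  shows "measure_pmf.expectation (Xc pu n) (\<lambda>x. \<Prod>t<n. f t (x t)) = (\<Prod>t<n. \<Sum>u\<in>UNIV. pmf pu u * f t u)"
proof -
  have "measure_pmf.expectation (Xc pu n) (\<lambda>x. \<Prod>t\<in>{0..<n}. f t (x t)) = (\<Prod>t\<in>{0..<n}. measure_pmf.expectation pu (f t))"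
    unfolding Xc_def by (intro expectation_prod_Pi_pmf) (auto simp: assms integrable_measure_pmf_finite)
  also have "\<dots> = (\<Prod>t\<in>{0..<n}. \<Sum>u\<in>UNIV. pmf pu u * f t u)"
    by (intro prod.cong refl, subst integral_measure_pmf_real[of UNIV]) (auto simp: mult.commute)
  finally show ?thesis by (simp add: atLeast0LessThan)
qed

lemma pmf_outdist: "pmf (outdist pu W) v = (\<Sum>u\<in>UNIV. pmf pu u * pmf (W u) v)" for pu :: "'u::finite pmf"
  unfolding outdist_def pmf_bind by (subst integral_measure_pmf_real[of UNIV]) (auto simp: mult.commute)

lemma Qout_exp:
  fixes pu :: "'u::finite pmf"
  shows "Qout pu W n vs = measure_pmf.expectation (Xc pu n) (\<lambda>x. Wn W n x vs)"
  unfolding Wn_def Qout_def by (subst Xc_prod) (auto simp: pmf_outdist)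

lemma sum_PiE_prod:
  fixes g :: "nat \<Rightarrow> 'v::finite \<Rightarrow> real"
  shows "(\<Sum>vs\<in>PiE {0..<n} (\<lambda>_. UNIV). \<Prod>t<n. g t (vs t)) = (\<Prod>t<n. \<Sum>v\<in>UNIV. g t v)"
  by (subst prod_sum_PiE) (auto simp: atLeast0LessThan)

lemma sum_PiE_power:
  fixes g :: "'v::finite \<Rightarrow> real"
  shows "(\<Sum>vs\<in>PiE {0..<n} (\<lambda>_. UNIV). \<Prod>t<n. g (vs t)) = (\<Sum>v\<in>UNIV. g v) ^ n"
  using sum_PiE_prod[where n=n and g="\<lambda>_. g"] by simp

lemma Pout_CB: "Pout W M n (\<lambda>p. C (fst p) (snd p)) vs = (1 / real M) * (\<Sum>j<M. Wn W n (C j) vs)"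
  unfolding Pout_def Wn_def by simp

lemma exp_tv_decomp:
  fixes pu :: "'u::finite pmf" and W :: "'u \<Rightarrow> 'v::finite pmf"
    and S :: "(nat \<Rightarrow> 'u) \<Rightarrow> (nat \<Rightarrow> 'v) \<Rightarrow> bool"
  assumes M: "ncode R n \<ge> 1"
  shows "exp_tv R pu W n \<le> 1/2 * (\<Sum>vs\<in>PiE {0..<n} (\<lambda>_. UNIV).
            sqrt (measure_pmf.expectation (Xc pu n) (\<lambda>x. (Wn W n x vs * (if S x vs then 1 else 0))^2) / real (ncode R n)))
          + (\<Sum>vs\<in>PiE {0..<n} (\<lambda>_. UNIV). measure_pmf.expectation (Xc pu n) (\<lambda>x. Wn W n x vs * (if S x vs then 0 else 1)))"
proof -
  define M where "M = ncode R n"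
  define h1 where "h1 = (\<lambda>vs x. Wn W n x vs * (if S x vs then 1 else (0::real)))"
  define h2 where "h2 = (\<lambda>vs x. Wn W n x vs * (if S x vs then 0 else (1::real)))"
  define \<mu>1 where "\<mu>1 = (\<lambda>vs. measure_pmf.expectation (Xc pu n) (h1 vs))"
  define \<mu>2 where "\<mu>2 = (\<lambda>vs. measure_pmf.expectation (Xc pu n) (h2 vs))"
  define V where "V = PiE {0..<n} (\<lambda>_::nat. (UNIV :: 'v set))"
  let ?E = "measure_pmf.expectation (CB pu M n)"
  have finV: "finite V" unfolding V_def by (intro finite_PiE) auto
  have int: "integrable (measure_pmf (CB pu M n)) f" for f :: "_ \<Rightarrow> real"
    by (rule integrable_measure_pmf_finite[OF finite_CB])
  have intX: "integrable (measure_pmf (Xc pu n)) f" for f :: "_ \<Rightarrow> real"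
    by (rule integrable_measure_pmf_finite[OF finite_Xc])
  have h1nn: "h1 vs x \<ge> 0" for vs x unfolding h1_def using Wn_nonneg[of W n x vs] by simp
  have h2nn: "h2 vs x \<ge> 0" for vs x unfolding h2_def using Wn_nonneg[of W n x vs] by simp
  have Q: "Qout pu W n vs = \<mu>1 vs + \<mu>2 vs" for vs
  proof -
    have "(\<lambda>x. Wn W n x vs) = (\<lambda>x. h1 vs x + h2 vs x)" by (auto simp: h1_def h2_def)
    thus ?thesis unfolding Qout_exp \<mu>1_def \<mu>2_def by (simp add: intX)
  qed
  have pw: "\<bar>Pout W M n (\<lambda>p. C (fst p) (snd p)) vs - Qout pu W n vs\<bar> \<le>
      \<bar>(1 / real M) * (\<Sum>j<M. h1 vs (C j)) - \<mu>1 vs\<bar> + ((1 / real M) * (\<Sum>j<M. h2 vs (C j)) + \<mu>2 vs)" for C vs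
  proof -
    have "Pout W M n (\<lambda>p. C (fst p) (snd p)) vs = (1 / real M) * (\<Sum>j<M. h1 vs (C j)) + (1 / real M) * (\<Sum>j<M. h2 vs (C j))"
    proof -
      have "(\<Sum>j<M. Wn W n (C j) vs) = (\<Sum>j<M. h1 vs (C j)) + (\<Sum>j<M. h2 vs (C j))"
        unfolding sum.distrib[symmetric] by (intro sum.cong refl) (simp add: h1_def h2_def)
      thus ?thesis unfolding Pout_CB by (simp add: distrib_left)
    qed
    moreover have "(1 / real M) * (\<Sum>j<M. h2 vs (C j)) \<ge> 0" by (intro mult_nonneg_nonneg sum_nonneg h2nn) auto
    moreover have "\<mu>2 vs \<ge> 0" unfolding \<mu>2_def by (intro integral_nonneg_AE) (auto simp: h2nn)
    ultimately show ?thesis unfolding Q by linarith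
  qed
  have e2: "?E (\<lambda>C. (1 / real M) * (\<Sum>j<M. h2 vs (C j))) = \<mu>2 vs" for vs
  proof -
    have "?E (\<lambda>C. (1 / real M) * (\<Sum>j<M. h2 vs (C j))) = (1 / real M) * (\<Sum>j<M. ?E (\<lambda>C. h2 vs (C j)))"
      by (simp add: int Bochner_Integration.integral_sum)
    also have "\<dots> = (1 / real M) * (\<Sum>j<M. \<mu>2 vs)"
      by (intro arg_cong[where f="\<lambda>x. _ * x"] sum.cong refl) (simp add: CB_single \<mu>2_def)
    also have "\<dots> = \<mu>2 vs" using M by (simp add: M_def)
    finally show ?thesis .
  qed
  have "exp_tv R pu W n = ?E (\<lambda>C. tv_seq n (Pout W M n (\<lambda>p. C (fst p) (snd p))) (Qout pu W n))"
    unfolding exp_tv_def codebook_nested M_def by (simp add: integral_map_pmf)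
  also have "\<dots> \<le> ?E (\<lambda>C. 1/2 * (\<Sum>vs\<in>V. \<bar>(1 / real M) * (\<Sum>j<M. h1 vs (C j)) - \<mu>1 vs\<bar> + ((1 / real M) * (\<Sum>j<M. h2 vs (C j)) + \<mu>2 vs)))"
    unfolding tv_seq_def V_def[symmetric]
    by (intro integral_mono int mult_left_mono sum_mono pw) auto
  also have "\<dots> = 1/2 * (\<Sum>vs\<in>V. ?E (\<lambda>C. \<bar>(1 / real M) * (\<Sum>j<M. h1 vs (C j)) - \<mu>1 vs\<bar>) + (?E (\<lambda>C. (1 / real M) * (\<Sum>j<M. h2 vs (C j))) + \<mu>2 vs))"
    by (simp add: int Bochner_Integration.integral_sum)
  also have "\<dots> = 1/2 * (\<Sum>vs\<in>V. ?E (\<lambda>C. \<bar>(1 / real M) * (\<Sum>j<M. h1 vs (C j)) - \<mu>1 vs\<bar>)) + (\<Sum>vs\<in>V. \<mu>2 vs)"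
    unfolding e2 by (simp add: sum.distrib algebra_simps sum_distrib_right)
  also have "\<dots> \<le> 1/2 * (\<Sum>vs\<in>V. sqrt (measure_pmf.expectation (Xc pu n) (\<lambda>x. (h1 vs x)^2) / real M)) + (\<Sum>vs\<in>V. \<mu>2 vs)"
    unfolding \<mu>1_def using M unfolding M_def[symmetric]
    by (intro add_right_mono mult_left_mono sum_mono avg_dev h1nn) auto
  finally show ?thesis unfolding V_def M_def h1_def h2_def \<mu>2_def .
qed

lemma ind_le:
  fixes L \<tau> \<beta> :: real
  assumes "L \<ge> 0" "\<tau> > 0" "\<beta> \<ge> 0"
  shows "(if L \<le> \<tau> then 0 else 1) \<le> L powr \<beta> / \<tau> powr \<beta>"
proof (cases "L \<le> \<tau>")
  case False
  hence "\<tau> powr \<beta> \<le> L powr \<beta>" using assms by (intro powr_mono2) auto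
  moreover have "\<tau> powr \<beta> > 0" using assms by simp
  ultimately show ?thesis using False by (simp add: field_simps)
qed simp

lemma ind_le2:
  fixes L \<tau> \<beta> :: real
  assumes "L \<ge> 0" "\<tau> > 0" "\<beta> \<ge> 0"
  shows "L * (if L \<le> \<tau> then 1 else 0) \<le> L powr (1 - \<beta>) * \<tau> powr \<beta>"
proof (cases "L \<le> \<tau> \<and> L > 0")
  case True
  have "L = L powr (1 - \<beta>) * L powr \<beta>" using True by (simp add: powr_add[symmetric])
  also have "\<dots> \<le> L powr (1 - \<beta>) * \<tau> powr \<beta>"
    using True assms by (intro mult_left_mono powr_mono2) auto
  finally show ?thesis using True by simp
next
  case False
  then show ?thesis using assms by auto
qed

lemma sqrt_prod: "sqrt (\<Prod>i\<in>A. f i) = (\<Prod>i\<in>A. sqrt (f i))"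
  by (induction A rule: infinite_finite_induct) (auto simp: real_sqrt_mult)

lemma W_eq:
  fixes pu :: "'u::finite pmf"
  assumes "pmf pu u > 0"
  shows "pmf (W u) v = pmf (outdist pu W) v * ell pu W u v"
proof (cases "pmf (outdist pu W) v = 0")
  case True
  have "pmf pu u * pmf (W u) v \<le> (\<Sum>u\<in>UNIV. pmf pu u * pmf (W u) v)"
    by (rule member_le_sum) auto
  hence "pmf pu u * pmf (W u) v \<le> 0" using True by (simp add: pmf_outdist)
  hence "pmf (W u) v = 0" using assms by (simp add: mult_le_0_iff)
  thus ?thesis using True by simp
next
  case False
  thus ?thesis using assms unfolding ell_def joint_def by (simp add: field_simps)
qed

lemma bound2:
  fixes pu :: "'u::finite pmf" and W :: "'u \<Rightarrow> 'v::finite pmf"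
  assumes tau: "\<tau> > 0" and b: "\<beta> \<ge> 0"
  shows "(\<Sum>vs\<in>PiE {0..<n} (\<lambda>_. UNIV). measure_pmf.expectation (Xc pu n)
            (\<lambda>x. Wn W n x vs * (if Lnn pu W n x vs \<le> \<tau> then 0 else 1)))
        \<le> (\<Sum>v\<in>UNIV. \<Sum>u\<in>UNIV. pmf pu u * (pmf (W u) v * ell pu W u v powr \<beta>)) ^ n / \<tau> powr \<beta>"
proof -
  have intX: "integrable (measure_pmf (Xc pu n)) f" for f :: "_ \<Rightarrow> real"
    by (rule integrable_measure_pmf_finite[OF finite_Xc])
  have "(\<Sum>vs\<in>PiE {0..<n} (\<lambda>_. UNIV). measure_pmf.expectation (Xc pu n)
            (\<lambda>x. Wn W n x vs * (if Lnn pu W n x vs \<le> \<tau> then 0 else 1)))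
     \<le> (\<Sum>vs\<in>PiE {0..<n} (\<lambda>_. UNIV). measure_pmf.expectation (Xc pu n)
            (\<lambda>x. Wn W n x vs * (Lnn pu W n x vs powr \<beta> / \<tau> powr \<beta>)))"
    by (intro sum_mono integral_mono intX mult_left_mono ind_le Lnn_nonneg Wn_nonneg tau b)
  also have "\<dots> = (\<Sum>vs\<in>PiE {0..<n} (\<lambda>_. UNIV). measure_pmf.expectation (Xc pu n)
            (\<lambda>x. \<Prod>t<n. pmf (W (x t)) (vs t) * ell pu W (x t) (vs t) powr \<beta>)) / \<tau> powr \<beta>"
    unfolding sum_divide_distrib
    by (intro sum.cong refl) (simp add: Wn_def Lnn_def prod_powr_distrib ell_nonneg prod.distrib)
  also have "\<dots> = (\<Sum>vs\<in>PiE {0..<n} (\<lambda>_. UNIV). \<Prod>t<n.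
        (\<Sum>u\<in>UNIV. pmf pu u * (pmf (W u) (vs t) * ell pu W u (vs t) powr \<beta>))) / \<tau> powr \<beta>"
    by (intro arg_cong[where f="\<lambda>x. x / _"] sum.cong refl Xc_prod) auto
  also have "\<dots> = (\<Sum>v\<in>UNIV. \<Sum>u\<in>UNIV. pmf pu u * (pmf (W u) v * ell pu W u v powr \<beta>)) ^ n / \<tau> powr \<beta>"
    by (subst sum_PiE_power) simp
  finally show ?thesis .
qed

lemma supp_Xc:
  assumes "x \<in> set_pmf (Xc pu n)" "t < n"
  shows "pmf pu (x t) > 0"
  using assms unfolding Xc_def by (subst (asm) set_Pi_pmf) (auto simp: PiE_dflt_def set_pmf_eq')

lemma bound1:
  fixes pu :: "'u::finite pmf" and W :: "'u \<Rightarrow> 'v::finite pmf"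
  assumes tau: "\<tau> > 0" and b: "\<beta>' \<ge> 0" and M: "M > 0"
  shows "(\<Sum>vs\<in>PiE {0..<n} (\<lambda>_. UNIV).
            sqrt (measure_pmf.expectation (Xc pu n) (\<lambda>x. (Wn W n x vs * (if Lnn pu W n x vs \<le> \<tau> then 1 else 0))^2) / M))
        \<le> sqrt (\<tau> powr \<beta>' / M) * (\<Sum>v\<in>UNIV. sqrt (pmf (outdist pu W) v *
             (\<Sum>u\<in>UNIV. pmf pu u * (pmf (W u) v * ell pu W u v powr (1 - \<beta>'))))) ^ n"
proof -
  define G where "G = (\<lambda>v. \<Sum>u\<in>UNIV. pmf pu u * (pmf (W u) v * ell pu W u v powr (1 - \<beta>')))"
  have intX: "integrable (measure_pmf (Xc pu n)) f" for f :: "_ \<Rightarrow> real"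
    by (rule integrable_measure_pmf_finite[OF finite_Xc])
  have pt: "(Wn W n x vs * (if Lnn pu W n x vs \<le> \<tau> then 1 else 0))^2 \<le>
      \<tau> powr \<beta>' * Qout pu W n vs * (\<Prod>t<n. pmf (W (x t)) (vs t) * ell pu W (x t) (vs t) powr (1 - \<beta>'))"
    if x: "x \<in> set_pmf (Xc pu n)" for x vs
  proof -
    have "Wn W n x vs = (\<Prod>t<n. pmf (outdist pu W) (vs t) * ell pu W (x t) (vs t))"
      unfolding Wn_def by (intro prod.cong refl W_eq supp_Xc[OF x]) auto
    hence WQ: "Wn W n x vs = Qout pu W n vs * Lnn pu W n x vs"
      by (simp add: Qout_def Lnn_def prod.distrib)
    have "(Wn W n x vs * (if Lnn pu W n x vs \<le> \<tau> then 1 else 0))^2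
        = Wn W n x vs * (Qout pu W n vs * (Lnn pu W n x vs * (if Lnn pu W n x vs \<le> \<tau> then 1 else 0)))"
    proof -
      have "(Wn W n x vs * (if Lnn pu W n x vs \<le> \<tau> then 1 else 0))^2
        = Wn W n x vs * ((Qout pu W n vs * Lnn pu W n x vs) * (if Lnn pu W n x vs \<le> \<tau> then 1 else 0))"
        by (simp only: WQ[symmetric]) (simp add: power2_eq_square)
      thus ?thesis by (simp add: mult.assoc)
    qed
    also have "\<dots> \<le> Wn W n x vs * (Qout pu W n vs * (Lnn pu W n x vs powr (1 - \<beta>') * \<tau> powr \<beta>'))"
      by (intro mult_left_mono ind_le2 Lnn_nonneg tau b Wn_nonneg)
         (auto simp: Qout_def intro!: prod_nonneg)
    also have "\<dots> = \<tau> powr \<beta>' * Qout pu W n vs * (\<Prod>t<n. pmf (W (x t)) (vs t) * ell pu W (x t) (vs t) powr (1 - \<beta>'))"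
      by (simp add: Wn_def Lnn_def prod_powr_distrib ell_nonneg prod.distrib)
    finally show ?thesis .
  qed
  have "(\<Sum>vs\<in>PiE {0..<n} (\<lambda>_. UNIV).
            sqrt (measure_pmf.expectation (Xc pu n) (\<lambda>x. (Wn W n x vs * (if Lnn pu W n x vs \<le> \<tau> then 1 else 0))^2) / M))
      \<le> (\<Sum>vs\<in>PiE {0..<n} (\<lambda>_. UNIV).
            sqrt (measure_pmf.expectation (Xc pu n) (\<lambda>x. \<tau> powr \<beta>' * Qout pu W n vs * (\<Prod>t<n. pmf (W (x t)) (vs t) * ell pu W (x t) (vs t) powr (1 - \<beta>'))) / M))"
    using M by (intro sum_mono real_sqrt_le_mono divide_right_mono integral_mono_AE intX AE_pmfI pt) auto
  also have "\<dots> = (\<Sum>vs\<in>PiE {0..<n} (\<lambda>_. UNIV). sqrt (\<tau> powr \<beta>' / M) * (\<Prod>t<n. sqrt (pmf (outdist pu W) (vs t) * G (vs t))))"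
  proof (intro sum.cong refl)
    fix vs :: "nat \<Rightarrow> 'v"
    have "measure_pmf.expectation (Xc pu n) (\<lambda>x. \<tau> powr \<beta>' * Qout pu W n vs * (\<Prod>t<n. pmf (W (x t)) (vs t) * ell pu W (x t) (vs t) powr (1 - \<beta>')))
       = \<tau> powr \<beta>' * Qout pu W n vs * (\<Prod>t<n. G (vs t))"
      by (subst integral_mult_right_zero, subst Xc_prod) (auto simp: G_def)
    also have "\<dots> = \<tau> powr \<beta>' * (\<Prod>t<n. pmf (outdist pu W) (vs t) * G (vs t))"
      by (simp add: Qout_def prod.distrib)
    finally have e: "measure_pmf.expectation (Xc pu n) (\<lambda>x. \<tau> powr \<beta>' * Qout pu W n vs * (\<Prod>t<n. pmf (W (x t)) (vs t) * ell pu W (x t) (vs t) powr (1 - \<beta>')))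
       = \<tau> powr \<beta>' * (\<Prod>t<n. pmf (outdist pu W) (vs t) * G (vs t))" .
    show "sqrt (measure_pmf.expectation (Xc pu n) (\<lambda>x. \<tau> powr \<beta>' * Qout pu W n vs * (\<Prod>t<n. pmf (W (x t)) (vs t) * ell pu W (x t) (vs t) powr (1 - \<beta>'))) / M)
       = sqrt (\<tau> powr \<beta>' / M) * (\<Prod>t<n. sqrt (pmf (outdist pu W) (vs t) * G (vs t)))"
      unfolding e by (simp add: real_sqrt_mult sqrt_prod real_sqrt_divide)
  qed
  also have "\<dots> = sqrt (\<tau> powr \<beta>' / M) * (\<Sum>v\<in>UNIV. sqrt (pmf (outdist pu W) v * G v)) ^ n"
    unfolding sum_distrib_left[symmetric] using sum_PiE_power[where g="\<lambda>v. sqrt (pmf (outdist pu W) v * G v)" and n=n] by simp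
  finally show ?thesis unfolding G_def .
qed



lemma Zval_powr: "Zval R pu W u v powr p = 2 powr (- R * p) * ell pu W u v powr p"
proof -
  have "Zval R pu W u v = 2 powr (- R) * ell pu W u v" unfolding Zval_def ell_def by simp
  thus ?thesis by (simp add: powr_mult ell_nonneg powr_powr)
qed

lemma constA:
  fixes pu :: "'u::finite pmf" and W :: "'u \<Rightarrow> 'v::finite pmf"
  shows "(\<Sum>v\<in>UNIV. \<Sum>u\<in>UNIV. pmf pu u * (pmf (W u) v * ell pu W u v powr \<beta>)) =
     2 powr (R * \<beta>) * (\<Sum>u\<in>UNIV. \<Sum>v\<in>UNIV. joint pu W u v * Zval R pu W u v powr \<beta>)"
proof -
  define Y where "Y = (\<Sum>u\<in>UNIV. \<Sum>v\<in>UNIV. pmf pu u * (pmf (W u) v * ell pu W u v powr \<beta>))"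
  have e: "joint pu W u v * Zval R pu W u v powr \<beta> = 2 powr (- R * \<beta>) * (pmf pu u * (pmf (W u) v * ell pu W u v powr \<beta>))" for u v
    unfolding Zval_powr joint_def by (simp only: mult_ac)
  have h: "(\<Sum>u\<in>UNIV. \<Sum>v\<in>UNIV. joint pu W u v * Zval R pu W u v powr \<beta>) = 2 powr (- R * \<beta>) * Y"
    unfolding e Y_def by (simp only: sum_distrib_left)
  have c: "2 powr (R * \<beta>) * 2 powr (- R * \<beta>) = 1" by (simp add: powr_add[symmetric])
  have "2 powr (R * \<beta>) * (\<Sum>u\<in>UNIV. \<Sum>v\<in>UNIV. joint pu W u v * Zval R pu W u v powr \<beta>) = Y"
    unfolding h mult.assoc[symmetric] c by simp
  thus ?thesis unfolding Y_def by (subst sum.swap) simp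
qed

lemma joint_zero:
  fixes pu :: "'u::finite pmf"
  assumes "pmf (outdist pu W) v = 0"
  shows "pmf pu u * pmf (W u) v = 0"
proof -
  have "pmf pu u * pmf (W u) v \<le> (\<Sum>u\<in>UNIV. pmf pu u * pmf (W u) v)"
    by (rule member_le_sum) auto
  moreover have "pmf pu u * pmf (W u) v \<ge> 0" by simp
  ultimately show ?thesis using assms by (simp only: pmf_outdist)
qed

lemma constB:
  fixes pu :: "'u::finite pmf" and W :: "'u \<Rightarrow> 'v::finite pmf"
  shows "(\<Sum>v\<in>UNIV. sqrt (pmf (outdist pu W) v *
             (\<Sum>u\<in>UNIV. pmf pu u * (pmf (W u) v * ell pu W u v powr p)))) =
     2 powr (R * p / 2) * (\<Sum>v\<in>UNIV. pmf (outdist pu W) v *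
             sqrt (\<Sum>u\<in>UNIV. cond pu W u v * Zval R pu W u v powr p))"
proof -
  have *: "sqrt (pmf (outdist pu W) v * (\<Sum>u\<in>UNIV. pmf pu u * (pmf (W u) v * ell pu W u v powr p))) =
     2 powr (R * p / 2) * (pmf (outdist pu W) v * sqrt (\<Sum>u\<in>UNIV. cond pu W u v * Zval R pu W u v powr p))" for v
  proof -
  define q where "q = pmf (outdist pu W) v"
  define S where "S = (\<Sum>u\<in>UNIV. pmf pu u * (pmf (W u) v * ell pu W u v powr p))"
  define T where "T = (\<Sum>u\<in>UNIV. cond pu W u v * Zval R pu W u v powr p)"
  have main: "sqrt (q * S) = 2 powr (R * p / 2) * (q * sqrt T)"
  proof (cases "q = 0")
    case True
    thus ?thesis by simp
  next
    case False
    hence qp: "q > 0" unfolding q_def using pmf_nonneg[of "outdist pu W" v] by linarith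
    have T: "T = 2 powr (- R * p) * S / q"
      unfolding T_def S_def q_def cond_def joint_def
      by (simp only: sum_distrib_left sum_divide_distrib Zval_powr, intro sum.cong refl) (simp add: field_simps)
    have c: "2 powr (R * p / 2) * sqrt (2 powr (- R * p)) = 1"
      by (simp add: powr_half_sqrt[symmetric] powr_powr powr_add[symmetric])
    have d: "q * sqrt (S / q) = sqrt (q * S)"
    proof -
      have "q * sqrt (S / q) = sqrt (q^2) * sqrt (S / q)" using qp by simp
      also have "\<dots> = sqrt (q^2 * (S / q))" by (simp only: real_sqrt_mult)
      also have "sqrt (q^2 * (S / q)) = sqrt (q * S)" using qp by (simp add: power2_eq_square)
      finally show ?thesis .
    qed
    have "2 powr (R * p / 2) * (q * sqrt T) = (2 powr (R * p / 2) * sqrt (2 powr (- R * p))) * (q * sqrt (S / q))"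
      unfolding T by (simp add: real_sqrt_mult real_sqrt_divide)
    also have "\<dots> = sqrt (q * S)" unfolding c d by simp
    finally show ?thesis by simp
  qed
  thus "sqrt (pmf (outdist pu W) v * (\<Sum>u\<in>UNIV. pmf pu u * (pmf (W u) v * ell pu W u v powr p))) =
     2 powr (R * p / 2) * (pmf (outdist pu W) v * sqrt (\<Sum>u\<in>UNIV. cond pu W u v * Zval R pu W u v powr p))"
    unfolding q_def S_def T_def .
  qed
  show ?thesis unfolding * by (simp only: sum_distrib_left)
qed

lemma exists_joint_pos:
  obtains u v where "pmf pu u > 0" "pmf (W u) v > 0"
proof -
  obtain u where u: "u \<in> set_pmf pu" using set_pmf_not_empty by fastforce
  obtain v where v: "v \<in> set_pmf (W u)" using set_pmf_not_empty by fastforce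
  show ?thesis using that[of u v] u v by (simp add: pmf_positive)
qed

lemma q_ge_joint:
  fixes pu :: "'u::finite pmf"
  shows "pmf pu u * pmf (W u) v \<le> pmf (outdist pu W) v"
  unfolding pmf_outdist by (rule member_le_sum) auto

lemma A_pos:
  fixes pu :: "'u::finite pmf" and W :: "'u \<Rightarrow> 'v::finite pmf"
  shows "0 < (\<Sum>u\<in>UNIV. \<Sum>v\<in>UNIV. joint pu W u v * Zval R pu W u v powr b)"
proof -
  obtain u v where uv: "pmf pu u > 0" "pmf (W u) v > 0" by (rule exists_joint_pos)
  have q: "pmf (outdist pu W) v > 0" using q_ge_joint[of pu u W v] uv
    by (meson less_le_trans mult_pos_pos)
  have Z: "Zval R pu W u v > 0" unfolding Zval_def joint_def using uv q by simp
  have nn: "0 \<le> joint pu W u' v' * Zval R pu W u' v' powr b" for u' v'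
    unfolding joint_def by simp
  have "0 < (\<Sum>v\<in>UNIV. joint pu W u v * Zval R pu W u v powr b)"
    by (rule sum_pos2[of _ v]) (use uv Z nn in \<open>auto simp: joint_def\<close>)
  thus ?thesis by (intro sum_pos2[of _ u]) (auto intro!: sum_nonneg nn)
qed

lemma B_pos:
  fixes pu :: "'u::finite pmf" and W :: "'u \<Rightarrow> 'v::finite pmf"
  shows "0 < (\<Sum>v\<in>UNIV. pmf (outdist pu W) v * sqrt (\<Sum>u\<in>UNIV. cond pu W u v * Zval R pu W u v powr p))"
proof -
  obtain u v where uv: "pmf pu u > 0" "pmf (W u) v > 0" by (rule exists_joint_pos)
  have q: "pmf (outdist pu W) v > 0" using q_ge_joint[of pu u W v] uv
    by (meson less_le_trans mult_pos_pos)
  have Z: "Zval R pu W u v > 0" unfolding Zval_def joint_def using uv q by simp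
  have nn: "0 \<le> cond pu W u' v' * Zval R pu W u' v' powr p" for u' v'
    unfolding cond_def joint_def by simp
  have "0 < (\<Sum>u\<in>UNIV. cond pu W u v * Zval R pu W u v powr p)"
    by (rule sum_pos2[of _ u]) (use uv Z q nn in \<open>auto simp: cond_def joint_def\<close>)
  hence "0 < pmf (outdist pu W) v * sqrt (\<Sum>u\<in>UNIV. cond pu W u v * Zval R pu W u v powr p)"
    using q by simp
  thus ?thesis by (intro sum_pos2[of _ v]) (auto intro!: sum_nonneg nn mult_nonneg_nonneg)
qed

lemma pow_powr2: "(2 powr x) ^ n = (2::real) powr (real n * x)"
  by (simp add: powr_realpow[symmetric] powr_powr mult.commute)

lemma ncode_ge: "real (ncode R n) \<ge> 2 powr (real n * R)"
  unfolding ncode_def by linarith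

lemma ncode_pos: "ncode R n \<ge> 1"
proof -
  have "2 powr (real n * R) > 0" by simp
  hence "\<lceil>2 powr (real n * R)\<rceil> \<ge> 1" by linarith
  thus ?thesis unfolding ncode_def by linarith
qed

lemma main_bound:
  fixes pu :: "'u::finite pmf" and W :: "'u \<Rightarrow> 'v::finite pmf"
  assumes b: "b \<ge> 0" and b': "b' \<ge> 0" and nz: "(b, b') \<noteq> (0, 0)"
  shows "exp_tv R pu W n \<le> 3/2 * 2 powr (- gamma_obj R pu W b b' * real n)"
proof -
  define A where "A = (\<Sum>u\<in>UNIV. \<Sum>v\<in>UNIV. joint pu W u v * Zval R pu W u v powr b)"
  define B where "B = (\<Sum>v\<in>UNIV. pmf (outdist pu W) v * sqrt (\<Sum>u\<in>UNIV. cond pu W u v * Zval R pu W u v powr (1 - b')))"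
  have Ap: "A > 0" unfolding A_def by (rule A_pos)
  have Bp: "B > 0" unfolding B_def by (rule B_pos)
  define a where "a = log 2 A"
  define c where "c = log 2 B"
  have Aa: "A = 2 powr a" using Ap by (simp add: a_def)
  have Bc: "B = 2 powr c" using Bp by (simp add: c_def)
  define D where "D = 2 * b + b'"
  have D: "D > 0" using b b' nz unfolding D_def by (cases "b = 0") auto
  define g where "g = gamma_obj R pu W b b'"
  have g: "g = (- b' * a - 2 * b * c) / D"
    unfolding g_def gamma_obj_def a_def c_def D_def A_def B_def by simp
  define \<sigma> where "\<sigma> = 2 * real n * (a - c) / D"
  define \<tau> where "\<tau> = (2::real) powr (real n * R + \<sigma>)"
  have tau: "\<tau> > 0" unfolding \<tau>_def by simp
  define M where "M = ncode R n"
  have M1: "M \<ge> 1" unfolding M_def by (rule ncode_pos)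
  have Mge: "real M \<ge> 2 powr (real n * R)" unfolding M_def by (rule ncode_ge)
  have Mpos: "real M > 0" using M1 by simp
  have "exp_tv R pu W n \<le> 1/2 * (\<Sum>vs\<in>PiE {0..<n} (\<lambda>_. UNIV).
            sqrt (measure_pmf.expectation (Xc pu n) (\<lambda>x. (Wn W n x vs * (if Lnn pu W n x vs \<le> \<tau> then 1 else 0))^2) / real M))
          + (\<Sum>vs\<in>PiE {0..<n} (\<lambda>_. UNIV). measure_pmf.expectation (Xc pu n) (\<lambda>x. Wn W n x vs * (if Lnn pu W n x vs \<le> \<tau> then 0 else 1)))"
    unfolding M_def by (rule exp_tv_decomp) (rule ncode_pos)
  also have "\<dots> \<le> 1/2 * (sqrt (\<tau> powr b' / real M) * (2 powr (R * (1 - b') / 2) * B) ^ n)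
      + (2 powr (R * b) * A) ^ n / \<tau> powr b"
  proof (intro add_mono mult_left_mono)
    show "(\<Sum>vs\<in>PiE {0..<n} (\<lambda>_. UNIV).
            sqrt (measure_pmf.expectation (Xc pu n) (\<lambda>x. (Wn W n x vs * (if Lnn pu W n x vs \<le> \<tau> then 1 else 0))^2) / real M))
       \<le> sqrt (\<tau> powr b' / real M) * (2 powr (R * (1 - b') / 2) * B) ^ n"
      using bound1[OF tau b' Mpos, where pu=pu and W=W and n=n] unfolding B_def constB[where R=R] by simp
    show "(\<Sum>vs\<in>PiE {0..<n} (\<lambda>_. UNIV). measure_pmf.expectation (Xc pu n) (\<lambda>x. Wn W n x vs * (if Lnn pu W n x vs \<le> \<tau> then 0 else 1)))
       \<le> (2 powr (R * b) * A) ^ n / \<tau> powr b"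
      using bound2[OF tau b, where pu=pu and W=W and n=n] unfolding A_def constA[where R=R] by simp
  qed simp
  also have "\<dots> \<le> 1/2 * (sqrt (\<tau> powr b' / 2 powr (real n * R)) * (2 powr (R * (1 - b') / 2) * B) ^ n)
      + (2 powr (R * b) * A) ^ n / \<tau> powr b"
    using Mge Bp Mpos tau by (intro add_right_mono mult_left_mono mult_right_mono real_sqrt_le_mono divide_left_mono) auto
  also have "sqrt (\<tau> powr b' / 2 powr (real n * R)) * (2 powr (R * (1 - b') / 2) * B) ^ n = 2 powr (- g * real n)"
  proof -
    have "sqrt (\<tau> powr b' / 2 powr (real n * R)) = 2 powr (((real n * R + \<sigma>) * b' - real n * R) / 2)"
      unfolding \<tau>_def by (simp add: powr_powr powr_diff powr_half_sqrt_powr)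
    moreover have "(2 powr (R * (1 - b') / 2) * B) ^ n = 2 powr (real n * (R * (1 - b') / 2 + c))"
      unfolding Bc by (simp add: powr_add[symmetric] pow_powr2)
    ultimately have "sqrt (\<tau> powr b' / 2 powr (real n * R)) * (2 powr (R * (1 - b') / 2) * B) ^ n
       = 2 powr (((real n * R + \<sigma>) * b' - real n * R) / 2 + real n * (R * (1 - b') / 2 + c))"
      by (simp add: powr_add)
    also have "((real n * R + \<sigma>) * b' - real n * R) / 2 + real n * (R * (1 - b') / 2 + c) = - g * real n"
      unfolding g \<sigma>_def using D unfolding D_def by (simp add: field_simps)
    finally show ?thesis .
  qed
  also have "(2 powr (R * b) * A) ^ n / \<tau> powr b = 2 powr (- g * real n)"
  proof -
    have "(2 powr (R * b) * A) ^ n / \<tau> powr b = 2 powr (real n * (R * b + a) - (real n * R + \<sigma>) * b)"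
      unfolding Aa \<tau>_def by (simp add: powr_add[symmetric] pow_powr2 powr_powr powr_diff)
    also have "real n * (R * b + a) - (real n * R + \<sigma>) * b = - g * real n"
      unfolding g \<sigma>_def using D unfolding D_def by (simp add: field_simps)
    finally show ?thesis .
  qed
  finally show ?thesis unfolding g_def by simp
qed

lemma sum_joint: "(\<Sum>u\<in>UNIV. \<Sum>v\<in>UNIV. joint pu W u v) = 1"
  for pu :: "'u::finite pmf" and W :: "'u \<Rightarrow> 'v::finite pmf"
proof -
  have "(\<Sum>u\<in>UNIV. \<Sum>v\<in>UNIV. joint pu W u v) = (\<Sum>u\<in>UNIV. pmf pu u * (\<Sum>v\<in>UNIV. pmf (W u) v))"
    unfolding joint_def by (simp add: sum_distrib_left)
  also have "\<dots> = (\<Sum>u\<in>UNIV. pmf pu u)" by (simp add: sum_pmf_eq_1)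
  also have "\<dots> = 1" by (simp add: sum_pmf_eq_1)
  finally show ?thesis .
qed

lemma Zval_zero_iff:
  fixes pu :: "'u::finite pmf"
  shows "Zval R pu W u v = 0 \<longleftrightarrow> joint pu W u v = 0"
proof -
  have "joint pu W u v \<noteq> 0 \<Longrightarrow> pmf (outdist pu W) v \<noteq> 0"
    using q_ge_joint[of pu u W v] unfolding joint_def
    by (metis mult_nonneg_nonneg order.antisym pmf_nonneg)
  thus ?thesis unfolding Zval_def by (auto simp: joint_def)
qed

lemma Zval_nonneg: "Zval R pu W u v \<ge> 0"
  unfolding Zval_def joint_def by simp

lemma exists_A_lt1:
  fixes pu :: "'u::finite pmf" and W :: "'u \<Rightarrow> 'v::finite pmf"
  assumes R: "R > mutual_info pu W"
  shows "\<exists>\<beta>>0. (\<Sum>u\<in>UNIV. \<Sum>v\<in>UNIV. joint pu W u v * Zval R pu W u v powr \<beta>) < 1"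
proof -
  define f where "f = (\<lambda>\<beta>. \<Sum>u\<in>UNIV. \<Sum>v\<in>UNIV. joint pu W u v * Zval R pu W u v powr \<beta>)"
  define d where "d = (\<lambda>u v. joint pu W u v * (if Zval R pu W u v = 0 then 0 else ln (Zval R pu W u v)))"
  have der1: "((\<lambda>x. joint pu W u v * Zval R pu W u v powr x) has_field_derivative d u v) (at 0)" for u v
  proof (cases "Zval R pu W u v = 0")
    case True thus ?thesis by (simp add: d_def)
  next
    case False
    hence "Zval R pu W u v > 0" using Zval_nonneg[of R pu W u v] by linarith
    thus ?thesis using False unfolding d_def by (auto intro!: derivative_eq_intros)
  qed
  have der: "(f has_field_derivative (\<Sum>u\<in>UNIV. \<Sum>v\<in>UNIV. d u v)) (at 0)"
    unfolding f_def by (intro DERIV_sum der1)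
  have dval: "d u v = ln 2 * (joint pu W u v * log 2 (joint pu W u v / (pmf pu u * pmf (outdist pu W) v)) - R * joint pu W u v)" for u v
  proof (cases "joint pu W u v = 0")
    case True thus ?thesis by (simp add: d_def)
  next
    case False
    hence jp: "joint pu W u v > 0" unfolding joint_def by (simp add: less_le)
    have qp: "pmf (outdist pu W) v > 0" using q_ge_joint[of pu u W v] jp unfolding joint_def by linarith
    have pp: "pmf pu u > 0" using jp unfolding joint_def by (simp add: less_le zero_less_mult_iff)
    have "ln (Zval R pu W u v) = ln (2 powr (-R)) + ln (joint pu W u v / (pmf pu u * pmf (outdist pu W) v))"
    proof -
      have eq: "Zval R pu W u v = 2 powr (-R) * (joint pu W u v / (pmf pu u * pmf (outdist pu W) v))"
        unfolding Zval_def by simp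
      have X: "joint pu W u v / (pmf pu u * pmf (outdist pu W) v) > 0" using jp qp pp by simp
      have pos: "(0::real) < 2 powr (-R)" by simp
      show ?thesis by (simp only: eq ln_mult_pos[OF pos X])
    qed
    hence lnZ: "ln (Zval R pu W u v) = ln (joint pu W u v / (pmf pu u * pmf (outdist pu W) v)) - R * ln 2"
      by (simp add: ln_powr)
    have "d u v = joint pu W u v * ln (Zval R pu W u v)"
      using False Zval_zero_iff[of R pu W u v] unfolding d_def by simp
    also have "\<dots> = joint pu W u v * (ln (joint pu W u v / (pmf pu u * pmf (outdist pu W) v)) - R * ln 2)"
      unfolding lnZ ..
    also have "\<dots> = ln 2 * (joint pu W u v * log 2 (joint pu W u v / (pmf pu u * pmf (outdist pu W) v)) - R * joint pu W u v)"
      by (simp add: log_def field_simps)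
    finally show ?thesis .
  qed
  have "(\<Sum>u\<in>UNIV. \<Sum>v\<in>UNIV. d u v) = ln 2 * (mutual_info pu W - R)"
    unfolding dval mutual_info_def sum_distrib_left[symmetric] sum_subtractf
    by (simp add: sum_distrib_left[symmetric] sum_joint right_diff_distrib)
  also have "\<dots> < 0" using R by (simp add: mult_pos_neg)
  finally obtain e where e: "e > 0" "\<And>h. h > 0 \<Longrightarrow> h < e \<Longrightarrow> f 0 > f (0 + h)"
    using DERIV_neg_dec_right[OF der] by blast
  have f0: "f 0 = 1"
  proof -
    have t: "joint pu W u v * Zval R pu W u v powr 0 = joint pu W u v" for u v
      using Zval_zero_iff[of R pu W u v] by auto
    show ?thesis unfolding f_def by (simp only: t sum_joint)
  qed
  have "f (e/2) < 1" using e(2)[of "e/2"] e(1) f0 by simp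
  thus ?thesis using e(1) unfolding f_def by (intro exI[of _ "e/2"]) auto
qed

lemma sum_cond_le1:
  fixes pu :: "'u::finite pmf"
  shows "(\<Sum>u\<in>UNIV. cond pu W u v) \<le> 1"
proof (cases "pmf (outdist pu W) v = 0")
  case True thus ?thesis by (simp add: cond_def)
next
  case False
  have "(\<Sum>u\<in>UNIV. cond pu W u v) = (\<Sum>u\<in>UNIV. pmf pu u * pmf (W u) v) / pmf (outdist pu W) v"
    unfolding cond_def joint_def by (simp add: sum_divide_distrib)
  also have "\<dots> = 1" using False by (simp add: pmf_outdist[symmetric])
  finally show ?thesis by simp
qed

lemma B1_le:
  fixes pu :: "'u::finite pmf" and W :: "'u \<Rightarrow> 'v::finite pmf"
  shows "(\<Sum>v\<in>UNIV. pmf (outdist pu W) v * sqrt (\<Sum>u\<in>UNIV. cond pu W u v * Zval R pu W u v powr (1 - 1))) \<le> 1"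
proof -
  have "(\<Sum>v\<in>UNIV. pmf (outdist pu W) v * sqrt (\<Sum>u\<in>UNIV. cond pu W u v * Zval R pu W u v powr (1 - 1)))
     \<le> (\<Sum>v\<in>UNIV. pmf (outdist pu W) v * 1)"
  proof (intro sum_mono mult_left_mono)
    fix v
    have "(\<Sum>u\<in>UNIV. cond pu W u v * Zval R pu W u v powr (1 - 1)) \<le> (\<Sum>u\<in>UNIV. cond pu W u v)"
      by (intro sum_mono) (auto simp: cond_def joint_def)
    also have "\<dots> \<le> 1" by (rule sum_cond_le1)
    finally show "sqrt (\<Sum>u\<in>UNIV. cond pu W u v * Zval R pu W u v powr (1 - 1)) \<le> 1" by simp
  qed simp
  also have "\<dots> = 1" by (simp add: sum_pmf_eq_1)
  finally show ?thesis .
qed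

lemma exp_tv_nonneg: "exp_tv R pu W n \<ge> 0"
  unfolding exp_tv_def tv_seq_def by (intro integral_nonneg_AE AE_pmfI mult_nonneg_nonneg sum_nonneg) auto

theorem mainTheorem3:
  fixes pu :: "'u::finite pmf" and W :: "'u \<Rightarrow> 'v::finite pmf" and R :: real
  assumes "R > mutual_info pu W"
  shows "((\<lambda>n. exp_tv R pu W n) \<longlonglongrightarrow> 0) \<and>
         (\<forall>n b b'. b \<ge> 0 \<and> b' \<ge> 0 \<and> (b, b') \<noteq> (0, 0) \<longrightarrow>
            exp_tv R pu W n \<le> 3/2 * 2 powr (- gamma_obj R pu W b b' * real n))"
proof
  show bnd: "\<forall>n b b'. b \<ge> 0 \<and> b' \<ge> 0 \<and> (b, b') \<noteq> (0, 0) \<longrightarrow>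
            exp_tv R pu W n \<le> 3/2 * 2 powr (- gamma_obj R pu W b b' * real n)"
    using main_bound by blast
  obtain \<beta> where \<beta>: "\<beta> > 0" and A1: "(\<Sum>u\<in>UNIV. \<Sum>v\<in>UNIV. joint pu W u v * Zval R pu W u v powr \<beta>) < 1"
    using exists_A_lt1[OF assms] by blast
  define A where "A = (\<Sum>u\<in>UNIV. \<Sum>v\<in>UNIV. joint pu W u v * Zval R pu W u v powr \<beta>)"
  define B where "B = (\<Sum>v\<in>UNIV. pmf (outdist pu W) v * sqrt (\<Sum>u\<in>UNIV. cond pu W u v * Zval R pu W u v powr (1 - 1)))"
  have Ap: "A > 0" unfolding A_def by (rule A_pos)
  have Bp: "B > 0" unfolding B_def by (rule B_pos)
  have la: "log 2 A < 0" using Ap A1 unfolding A_def by simp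
  have lb: "log 2 B \<le> 0" using Bp B1_le[of pu W R] unfolding B_def by simp
  define g where "g = gamma_obj R pu W \<beta> 1"
  have g: "g = (- log 2 A - 2 * \<beta> * log 2 B) / (2 * \<beta> + 1)"
    unfolding g_def gamma_obj_def A_def B_def by simp
  have "2 * \<beta> * log 2 B \<le> 0" using lb \<beta> by (simp add: mult_nonneg_nonpos)
  hence gp: "g > 0" unfolding g using la \<beta> by (intro divide_pos_pos) auto
  have lim: "(\<lambda>n. 3/2 * 2 powr (- g * real n)) \<longlonglongrightarrow> 0"
  proof -
    have "(\<lambda>n. (2 powr (- g)) ^ n) \<longlonglongrightarrow> 0"
      using gp powr_less_mono[of "- g" 0 "2::real"] by (intro LIMSEQ_realpow_zero) auto
    hence "(\<lambda>n. 3/2 * (2 powr (- g)) ^ n) \<longlonglongrightarrow> 0"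
      by (rule tendsto_mult_right_zero)
    thus ?thesis by (simp add: pow_powr2 mult.commute)
  qed
  show "(\<lambda>n. exp_tv R pu W n) \<longlonglongrightarrow> 0"
  proof (rule tendsto_sandwich[OF _ _ tendsto_const lim])
    show "\<forall>\<^sub>F n in sequentially. 0 \<le> exp_tv R pu W n" by (simp add: exp_tv_nonneg)
    show "\<forall>\<^sub>F n in sequentially. exp_tv R pu W n \<le> 3/2 * 2 powr (- g * real n)"
      using bnd \<beta> unfolding g_def by (intro always_eventually allI) auto
  qed
qed

end
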